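(* Let $R$ be a $*$-ring with $2\in U(R)$. The following are equivalent: (1) $R$ is clean and every unit $u$ of $R$ satisfies $u^*=u$; (2) $R$ is $*$-clean and $*$ is the identity map of $R$.
   Context: A $*$-ring is a ring with identity with an involution $*$. A projection is $p$ with $p^2=p=p^*$. $R$ is clean if every element is a sum of an idempotent and a unit; $*$-clean if every element is a sum of a projection and a unit. *)

theory Defs
  imports Main
begin

definition involution :: "('a::ring_1 \<Rightarrow> 'a) \<Rightarrow> bool" where
  "involution s \<longleftrightarrow> (\<forall>a b. s (a + b) = s a + s b) \<and> (\<forall>a b. s (a * b) = s b * s a) \<and> (\<forall>a. s (s a) = a)"

definition ring_unit :: "'a::ring_1 \<Rightarrow> bool" where
  "ring_unit u \<longleftrightarrow> (\<exists>v. u * v = 1 \<and> v * u = 1)"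

definition idempotent :: "'a::ring_1 \<Rightarrow> bool" where
  "idempotent e \<longleftrightarrow> e * e = e"

definition projection :: "('a::ring_1 \<Rightarrow> 'a) \<Rightarrow> 'a \<Rightarrow> bool" where
  "projection s p \<longleftrightarrow> p * p = p \<and> s p = p"

definition clean_ring :: "'a::ring_1 itself \<Rightarrow> bool" where
  "clean_ring _ \<longleftrightarrow> (\<forall>a::'a. \<exists>e u. idempotent e \<and> ring_unit u \<and> a = e + u)"

definition star_clean :: "('a::ring_1 \<Rightarrow> 'a) \<Rightarrow> bool" where
  "star_clean s \<longleftrightarrow> (\<forall>a. \<exists>p u. projection s p \<and> ring_unit u \<and> a = p + u)"

end

theory Submission
  imports Defs
begin

lemma add_hom0: fixes s :: "'a::ring_1 \<Rightarrow> 'a" assumes "\<forall>a b. s (a + b) = s a + s b" shows "s (0::'a::ring_1) = 0"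
  proof -
  have "s 0 + s 0 = s 0 + 0" using assms[rule_format, of 0 0] by simp
  thus ?thesis using add_left_cancel by blast
qed

lemma add_hom_diff: fixes s :: "'a::ring_1 \<Rightarrow> 'a" assumes "\<forall>a b. s (a + b) = s a + s b" shows "s ((a::'a::ring_1) - b) = s a - s b"
  proof -
  have "s a = s (a - b) + s b" using assms[rule_format, of "a - b" b] by simp
  thus ?thesis by (simp add: eq_diff_eq)
qed

lemma idem_fixed:
  fixes s :: "'a::ring_1 \<Rightarrow> 'a"
  assumes add: "\<forall>a b. s (a + b) = s a + s b"
    and two: "ring_unit (2::'a)"
    and U: "\<forall>u. ring_unit u \<longrightarrow> s u = u"
    and e: "e * e = e"
  shows "s e = e"
proof -
  have u1: "ring_unit (1::'a)" unfolding ring_unit_def by auto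
  have s1: "s 1 = 1" using U u1 by auto
  have "(1 - 2*e) * (1 - 2*e) = 1"
    using e by (simp add: algebra_simps mult_2 mult_2_right)
  hence "ring_unit (1 - 2*e)" unfolding ring_unit_def by auto
  hence "s (1 - 2*e) = 1 - 2*e" using U by auto
  moreover have "s (1 - 2*e) = 1 - (s e + s e)"
    using add_hom_diff[OF add] s1 add[rule_format, of e e] by (simp add: mult_2)
  ultimately have "1 - (e + e) = 1 - (s e + s e)" by (simp add: mult_2)
  hence "e + e = s e + s e" by (rule diff_left_imp_eq[symmetric, THEN sym])
  hence "2 * (e - s e) = 0" by (simp add: algebra_simps mult_2)
  moreover obtain v :: 'a where "v * 2 = 1" using two unfolding ring_unit_def by auto
  ultimately have "e - s e = 0"
    by (metis mult.assoc mult_1 mult_zero_right)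
  thus ?thesis by simp
qed

theorem corollary2p4:
  fixes s :: "'a::ring_1 \<Rightarrow> 'a"
  assumes "involution s"
    and "ring_unit (2::'a)"
  shows "(clean_ring TYPE('a) \<and> (\<forall>u. ring_unit u \<longrightarrow> s u = u))
         \<longleftrightarrow> (star_clean s \<and> s = id)"
proof
  have add: "\<forall>a b. s (a + b) = s a + s b" using assms(1) unfolding involution_def by auto
  assume L: "clean_ring TYPE('a) \<and> (\<forall>u. ring_unit u \<longrightarrow> s u = u)"
  have sid: "s = id"
  proof
    fix x :: 'a
    obtain e u where "idempotent e" "ring_unit u" "x = e + u"
      using L unfolding clean_ring_def by blast
    thus "s x = id x"
      using idem_fixed[OF add assms(2)] L add unfolding idempotent_def by auto
  qed
  have "star_clean s"
    unfolding star_clean_def projection_def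
    using L unfolding clean_ring_def idempotent_def sid by auto
  thus "star_clean s \<and> s = id" using sid by auto
next
  assume R: "star_clean s \<and> s = id"
  thus "clean_ring TYPE('a) \<and> (\<forall>u. ring_unit u \<longrightarrow> s u = u)"
    unfolding clean_ring_def star_clean_def projection_def idempotent_def by auto
qed

end
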